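(* Let $R\subset S$ be an FCP ring extension. Then $\pounds[R,S]\leq \ell[R,S]\leq \mathrm{L}_R(S/R)$.
   Context: All rings are commutative with identity. $[R,S]$ is the lattice of $R$-subalgebras of $S$ (meet = intersection, join = product). FCP: every chain in $[R,S]$ is finite. $T\subset U$ minimal means $[T,U]=\{T,U\}$; atoms of $[R,S]$ are the $T$ with $R\subset T$ minimal; the socle $\mathcal S[R,S]$ is the product of all atoms. The Loewy series: $S_0=R$, $S_{i+1}=\mathcal S[S_i,S]$ while $S_i\neq S$; $\pounds[R,S]$ is the least $n$ with $S_n=S$. $\ell[R,S]$ is the supremum of lengths of chains in $[R,S]$, and $\mathrm{L}_R(S/R)$ is the length of the $R$-module $S/R$. *)

theory Defs
  imports Main "HOL-Library.Extended_Nat"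
begin

text \<open>Rings are subsets of an ambient commutative ring type. A subring contains 0, 1
 and is closed under addition, negation and multiplication.\<close>
definition subring :: "'a::comm_ring_1 set \<Rightarrow> bool" where
  "subring A \<longleftrightarrow> 0 \<in> A \<and> 1 \<in> A \<and> (\<forall>x\<in>A. \<forall>y\<in>A. x + y \<in> A \<and> x * y \<in> A) \<and> (\<forall>x\<in>A. - x \<in> A)"

definition ring_ext :: "'a::comm_ring_1 set \<Rightarrow> 'a set \<Rightarrow> bool" where
  "ring_ext R S \<longleftrightarrow> subring R \<and> subring S \<and> R \<subseteq> S"

text \<open>The lattice [R,S] of R-subalgebras of S, i.e. subrings T with R \<subseteq> T \<subseteq> S.\<close>
definition interm :: "'a::comm_ring_1 set \<Rightarrow> 'a set \<Rightarrow> 'a set set" where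
  "interm R S = {T. subring T \<and> R \<subseteq> T \<and> T \<subseteq> S}"

definition is_chain_in :: "'b set set \<Rightarrow> 'b set set \<Rightarrow> bool" where
  "is_chain_in C X \<longleftrightarrow> C \<subseteq> X \<and> (\<forall>A\<in>C. \<forall>B\<in>C. A \<subseteq> B \<or> B \<subseteq> A)"

definition FCP :: "'a::comm_ring_1 set \<Rightarrow> 'a set \<Rightarrow> bool" where
  "FCP R S \<longleftrightarrow> (\<forall>C. is_chain_in C (interm R S) \<longrightarrow> finite C)"

definition chain_length_sup :: "'b set set \<Rightarrow> enat" where
  "chain_length_sup X = Sup {enat (card C - 1) | C. is_chain_in C X \<and> finite C \<and> C \<noteq> {}}"

definition ell :: "'a::comm_ring_1 set \<Rightarrow> 'a set \<Rightarrow> enat" where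
  "ell R S = chain_length_sup (interm R S)"

definition sgen :: "'a::comm_ring_1 set \<Rightarrow> 'a set" where
  "sgen X = \<Inter>{T. subring T \<and> X \<subseteq> T}"

definition minimal_ext :: "'a::comm_ring_1 set \<Rightarrow> 'a set \<Rightarrow> bool" where
  "minimal_ext T U \<longleftrightarrow> T \<subset> U \<and> interm T U = {T, U}"

definition atoms :: "'a::comm_ring_1 set \<Rightarrow> 'a set \<Rightarrow> 'a set set" where
  "atoms R S = {T \<in> interm R S. minimal_ext R T}"

text \<open>Socle: product of all atoms of [R,S] (the empty product being R).\<close>
definition socle :: "'a::comm_ring_1 set \<Rightarrow> 'a set \<Rightarrow> 'a set" where
  "socle R S = sgen (R \<union> \<Union>(atoms R S))"

fun loewy_series :: "'a::comm_ring_1 set \<Rightarrow> 'a set \<Rightarrow> nat \<Rightarrow> 'a set" where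
  "loewy_series R S 0 = R"
| "loewy_series R S (Suc n) = (if loewy_series R S n = S then S else socle (loewy_series R S n) S)"

definition loewy_length :: "'a::comm_ring_1 set \<Rightarrow> 'a set \<Rightarrow> enat" where
  "loewy_length R S = (if \<exists>n. loewy_series R S n = S then enat (LEAST n. loewy_series R S n = S) else \<infinity>)"

text \<open>R-submodules of S containing R; these correspond bijectively to the R-submodules
 of the R-module S/R.\<close>
definition submods_over :: "'a::comm_ring_1 set \<Rightarrow> 'a set \<Rightarrow> 'a set set" where
  "submods_over R S = {M. R \<subseteq> M \<and> M \<subseteq> S \<and> (\<forall>x\<in>M. \<forall>y\<in>M. x + y \<in> M) \<and> (\<forall>x\<in>M. - x \<in> M)
                         \<and> (\<forall>r\<in>R. \<forall>x\<in>M. r * x \<in> M)}"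

definition mod_length :: "'a::comm_ring_1 set \<Rightarrow> 'a set \<Rightarrow> enat" where
  "mod_length R S = chain_length_sup (submods_over R S)"

end

theory Submission
  imports Defs
begin

lemma subring_sgen: "subring (sgen X)"
  unfolding sgen_def subring_def by auto

lemma sgen_sub: "X \<subseteq> S \<Longrightarrow> subring S \<Longrightarrow> sgen X \<subseteq> S"
  unfolding sgen_def by auto

lemma sgen_ge: "X \<subseteq> sgen X"
  unfolding sgen_def by auto

lemma chain_sup_mono: "X \<subseteq> Y \<Longrightarrow> chain_length_sup X \<le> chain_length_sup Y"
  unfolding chain_length_sup_def is_chain_in_def
  by (rule Sup_subset_mono) blast

lemma socle_interm:
  assumes "T \<in> interm R S" "subring S"
  shows "socle T S \<in> interm R S" "T \<subseteq> socle T S"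
proof -
  have "\<Union>(atoms T S) \<subseteq> S" unfolding atoms_def interm_def by auto
  moreover have "T \<subseteq> S" using assms unfolding interm_def by auto
  ultimately have "socle T S \<subseteq> S" unfolding socle_def using sgen_sub[of "T \<union> \<Union>(atoms T S)" S] assms(2) by auto
  moreover have "T \<subseteq> socle T S" unfolding socle_def using sgen_ge[of "T \<union> \<Union>(atoms T S)"] by auto
  ultimately show "socle T S \<in> interm R S" "T \<subseteq> socle T S"
    using assms subring_sgen unfolding interm_def socle_def by auto
qed

lemma wf_interm:
  assumes "FCP R S"
  shows "wf {(X,Y). X \<in> interm R S \<and> Y \<in> interm R S \<and> X \<subset> Y}"
proof (rule ccontr)
  assume "\<not> ?thesis"
  then obtain f where f: "\<And>i. (f (Suc i), f i) \<in> {(X,Y). X \<in> interm R S \<and> Y \<in> interm R S \<and> X \<subset> Y}"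
    unfolding wf_iff_no_infinite_down_chain by blast
  define g where "g i = - f i" for i
  have "g i < g (Suc i)" for i using f[of i] unfolding g_def by auto
  hence sm: "strict_mono g" by (simp add: strict_mono_Suc_iff)
  have mono: "i \<le> j \<Longrightarrow> f j \<subseteq> f i" for i j
    using strict_mono_less_eq[OF sm, of i j] unfolding g_def by auto
  have "inj f"
  proof
    fix i j assume "f i = f j"
    hence "g i = g j" unfolding g_def by simp
    thus "i = j" using strict_mono_eq[OF sm] by simp
  qed
  hence "infinite (range f)" using finite_imageD by blast
  moreover have "is_chain_in (range f) (interm R S)"
  proof -
    have "f i \<subseteq> f j \<or> f j \<subseteq> f i" for i j using mono nle_le by metis
    thus ?thesis unfolding is_chain_in_def using f by auto
  qed
  ultimately show False using assms unfolding FCP_def by blast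
qed

lemma socle_grows:
  assumes "FCP R S" "T \<in> interm R S" "T \<noteq> S" "S \<in> interm R S"
  shows "T \<subset> socle T S"
proof -
  let ?r = "{(X,Y). X \<in> interm R S \<and> Y \<in> interm R S \<and> X \<subset> Y}"
  let ?Q = "{U \<in> interm R S. T \<subset> U}"
  have TS: "T \<subset> S" using assms unfolding interm_def by auto
  hence SQ: "S \<in> ?Q" using assms by auto
  have ex: "\<exists>U\<in>?Q. \<forall>V. (V,U)\<in>?r \<longrightarrow> V\<notin>?Q"
    by (rule wf_eq_minimal[THEN iffD1, rule_format, OF wf_interm[OF assms(1)] SQ])
  obtain U where U: "U \<in> ?Q" and Umin: "\<And>V. (V, U) \<in> ?r \<Longrightarrow> V \<notin> ?Q"
    using ex by blast
  have "minimal_ext T U"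
    unfolding minimal_ext_def
  proof
    show "T \<subset> U" using U by auto
    show "interm T U = {T, U}"
    proof
      show "{T, U} \<subseteq> interm T U" using U assms(2) unfolding interm_def by auto
      show "interm T U \<subseteq> {T, U}"
      proof
        fix V assume V: "V \<in> interm T U"
        hence VI: "V \<in> interm R S" using U assms(2) unfolding interm_def by auto
        show "V \<in> {T, U}"
        proof (rule ccontr)
          assume "V \<notin> {T, U}"
          hence "(V, U) \<in> ?r" "V \<in> ?Q" using V VI U unfolding interm_def by auto
          thus False using Umin by blast
        qed
      qed
    qed
  qed
  moreover have "U \<in> interm T S" using U unfolding interm_def by auto
  ultimately have "U \<in> atoms T S" unfolding atoms_def by auto
  hence "U \<subseteq> T \<union> \<Union>(atoms T S)" by (rule Union_upper[THEN le_supI2])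
  hence "U \<subseteq> socle T S" unfolding socle_def using sgen_ge[of "T \<union> \<Union>(atoms T S)"] by (rule subset_trans)
  moreover have "T \<subseteq> socle T S" unfolding socle_def using sgen_ge[of "T \<union> \<Union>(atoms T S)"] by auto
  ultimately show ?thesis using U by auto
qed

theorem proposition8p22:
  fixes R S :: "'a::comm_ring_1 set"
  assumes "ring_ext R S" and "FCP R S"
  shows "loewy_length R S \<le> ell R S \<and> ell R S \<le> mod_length R S"
proof
  have sS: "subring S" and RS: "R \<subseteq> S" and sR: "subring R"
    using assms(1) unfolding ring_ext_def by auto
  have SI: "S \<in> interm R S" using sS RS unfolding interm_def by auto
  let ?L = "loewy_series R S"
  have LI: "?L n \<in> interm R S" for n
  proof (induction n)
    case 0 then show ?case using sR RS unfolding interm_def by auto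
  next
    case (Suc n) then show ?case using SI socle_interm[OF _ sS] by auto
  qed
  have Lmono: "?L n \<subseteq> ?L (Suc n)" for n
    using socle_interm[OF LI sS] by auto
  have Lstrict: "?L n \<noteq> S \<Longrightarrow> ?L n \<subset> ?L (Suc n)" for n
    using socle_grows[OF assms(2) LI _ SI] by auto
  have Lmono2: "i \<le> j \<Longrightarrow> ?L i \<subseteq> ?L j" for i j
    using lift_Suc_mono_le[of ?L, OF Lmono] by blast
  have ex: "\<exists>n. ?L n = S"
  proof (rule ccontr)
    assume "\<not> ?thesis"
    hence "strict_mono ?L" using Lstrict by (simp add: strict_mono_Suc_iff)
    hence "inj ?L" by (rule strict_mono_imp_inj_on)
    hence "infinite (range ?L)" using finite_imageD by blast
    moreover have "is_chain_in (range ?L) (interm R S)"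
    proof -
      have "?L i \<subseteq> ?L j \<or> ?L j \<subseteq> ?L i" for i j using Lmono2 nle_le by metis
      thus ?thesis unfolding is_chain_in_def using LI by auto
    qed
    ultimately show False using assms(2) unfolding FCP_def by blast
  qed
  define N where "N = (LEAST n. ?L n = S)"
  have LL: "loewy_length R S = enat N" unfolding loewy_length_def N_def using ex by simp
  have before: "i < N \<Longrightarrow> ?L i \<noteq> S" for i unfolding N_def using not_less_Least by blast
  have inj: "inj_on ?L {0..N}"
  proof (rule inj_onI)
    fix i j assume ij: "i \<in> {0..N}" "j \<in> {0..N}" "?L i = ?L j"
    show "i = j"
    proof (rule ccontr)
      assume "i \<noteq> j"
      then consider "i < j" | "j < i" by linarith
      thus False
      proof cases
        case 1
        hence "?L i \<subset> ?L (Suc i)" using Lstrict before ij by auto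
        moreover have "?L (Suc i) \<subseteq> ?L j" using 1 Lmono2[of "Suc i" j] by (metis Suc_leI)
        ultimately show False using ij by auto
      next
        case 2
        hence "?L j \<subset> ?L (Suc j)" using Lstrict before ij by auto
        moreover have "?L (Suc j) \<subseteq> ?L i" using 2 Lmono2[of "Suc j" i] by (metis Suc_leI)
        ultimately show False using ij by auto
      qed
    qed
  qed
  let ?C = "?L ` {0..N}"
  have card: "card ?C = Suc N" using card_image[OF inj] by simp
  have ch: "is_chain_in ?C (interm R S)"
  proof -
    have "?L i \<subseteq> ?L j \<or> ?L j \<subseteq> ?L i" for i j using Lmono2 nle_le by metis
    thus ?thesis unfolding is_chain_in_def using LI by auto
  qed
  have "enat (card ?C - 1) \<in> {enat (card C - 1) | C. is_chain_in C (interm R S) \<and> finite C \<and> C \<noteq> {}}"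
    using ch by auto
  hence "enat (card ?C - 1) \<le> ell R S" unfolding ell_def chain_length_sup_def by (rule Sup_upper)
  thus "loewy_length R S \<le> ell R S" using LL card by simp
next
  have "interm R S \<subseteq> submods_over R S"
    unfolding interm_def submods_over_def subring_def by auto
  thus "ell R S \<le> mod_length R S" unfolding ell_def mod_length_def by (rule chain_sup_mono)
qed

end
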